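(* (a) Let $V\subset\mathbb R^m$ be a closed convex body centrally symmetric with respect to the origin, with width $w(V)$. For every $x\in\mathbb R^m\setminus V$ and every $P\in\mathcal P_{n,m}$, $$|P(x)|\le T_n\big(2|x|/w(V)\big)\|P\|_{C(V)}.$$ (b) For every $\lambda>0$, $k\in\mathbb Z^m_+$, $x\in\mathbb R^m$ with $|x_j|>\lambda$ for all $j=1,\dots,m$, and every $P\in\mathcal Q_{n,m}$, $$|D^kP(x)|\le\lambda^{-\langle k\rangle}\Big|\prod_{j=1}^mT_n^{(k_j)}(x_j/\lambda)\Big|\,\|P\|_{C(Q^m_\lambda)}.$$
   Context: $|x|$ is the Euclidean norm. The width $w(V)$ is the minimum distance between two parallel supporting hyperplanes of $V$. $\mathcal P_{n,m}$ is the set of polynomials $\sum_{\langle k\rangle\le n}c_kx^k$ in $m$ variables with complex coefficients of total degree at most $n$; $\mathcal Q_{n,m}$ is the set of polynomials $\sum_{k\in\mathbb Z^m_+,\max_jk_j\le n}c_kx^k$ with complex coefficients of degree at most $n$ in each variable. For $k\in\mathbb Z^m_+$: $\langle k\rangle=\sum k_j$, $x^k=\prod x_j^{k_j}$, $D^k=\prod\partial^{k_j}/\partial x_j^{k_j}$. $Q^m_\lambda=\{x:\max_j|x_j|\le\lambda\}$. $T_n(u)=\frac12((u+\sqrt{u^2-1})^n+(u-\sqrt{u^2-1})^n)$ is the Chebyshev polynomial; $\|P\|_{C(S)}=\max_S|P|$. *)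

theory Defs
  imports "HOL-Analysis.Analysis"
begin

text \<open>Chebyshev polynomial T_n(u) = ((u + sqrt(u^2-1))^n + (u - sqrt(u^2-1))^n)/2,
  evaluated with the complex square root so that the formula is valid for all real u.\<close>
definition cheb :: "nat \<Rightarrow> real \<Rightarrow> real" where
  "cheb n u = Re (((complex_of_real u + csqrt (complex_of_real (u^2 - 1))) ^ n
                 + (complex_of_real u - csqrt (complex_of_real (u^2 - 1))) ^ n) / 2)"

definition Pdeg :: "nat \<Rightarrow> ('m::finite \<Rightarrow> nat) set" where
  "Pdeg n = {a. (\<Sum>j\<in>UNIV. a j) \<le> n}"

definition Qdeg :: "nat \<Rightarrow> ('m::finite \<Rightarrow> nat) set" where
  "Qdeg n = {a. \<forall>j. a j \<le> n}"

definition mpoly_eval :: "('m::finite \<Rightarrow> nat) set \<Rightarrow> (('m \<Rightarrow> nat) \<Rightarrow> complex) \<Rightarrow> real^'m \<Rightarrow> complex" where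
  "mpoly_eval S c x = (\<Sum>a\<in>S. c a * (\<Prod>j\<in>UNIV. complex_of_real ((x$j) ^ a j)))"

text \<open>D^k applied to the polynomial sum over a in S of c_a x^a, evaluated at x:
  D^k x^a = prod_j a_j(a_j-1)...(a_j-k_j+1) x_j^(a_j-k_j)  (zero if some k_j > a_j).\<close>
definition mpoly_deriv :: "('m::finite \<Rightarrow> nat) set \<Rightarrow> (('m \<Rightarrow> nat) \<Rightarrow> complex) \<Rightarrow> ('m \<Rightarrow> nat) \<Rightarrow> real^'m \<Rightarrow> complex" where
  "mpoly_deriv S c k x = (\<Sum>a\<in>S. c a * (\<Prod>j\<in>UNIV.
       of_nat (fact (k j) * (a j choose k j)) * complex_of_real ((x$j) ^ (a j - k j))))"

definition width :: "'a::euclidean_space set \<Rightarrow> real" where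
  "width V = Inf {(SUP y\<in>V. u \<bullet> y) - (INF y\<in>V. u \<bullet> y) | u. norm u = 1}"

definition cube :: "real \<Rightarrow> (real^'m) set" where
  "cube lam = {y. \<forall>j. \<bar>y$j\<bar> \<le> lam}"

end

theory Submission
  imports Defs "HOL-Computational_Algebra.Polynomial"
begin

fun Tp :: "nat \<Rightarrow> real poly" where
  "Tp 0 = 1"
| "Tp (Suc 0) = [:0,1:]"
| "Tp (Suc (Suc n)) = [:0,2:] * Tp (Suc n) - Tp n"

lemma Tp_cheb: "poly (Tp n) u = cheb n u"
proof -
  define z1 where "z1 = complex_of_real u + csqrt (complex_of_real (u^2 - 1))"
  define z2 where "z2 = complex_of_real u - csqrt (complex_of_real (u^2 - 1))"
  have sq: "(csqrt (complex_of_real (u^2 - 1)))^2 = complex_of_real (u^2 - 1)"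
    by (rule power2_csqrt)
  have h1: "z1^2 = 2 * complex_of_real u * z1 - 1"
    using sq unfolding z1_def by (simp add: power2_eq_square algebra_simps)
  have h2: "z2^2 = 2 * complex_of_real u * z2 - 1"
    using sq unfolding z2_def by (simp add: power2_eq_square algebra_simps)
  have main: "complex_of_real (poly (Tp n) u) = (z1^n + z2^n) / 2" for n
  proof (induction n rule: Tp.induct)
    case 1 then show ?case by simp
  next
    case 2 then show ?case by (simp add: z1_def z2_def)
  next
    case (3 n)
    have e1: "z1 ^ Suc (Suc n) = z1^n * z1^2" "z2 ^ Suc (Suc n) = z2^n * z2^2"
      by (simp_all add: power2_eq_square algebra_simps)
    have "complex_of_real (poly (Tp (Suc (Suc n))) u)
        = 2 * complex_of_real u * complex_of_real (poly (Tp (Suc n)) u) - complex_of_real (poly (Tp n) u)"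
      by simp
    also have "\<dots> = 2 * complex_of_real u * ((z1^Suc n + z2^Suc n) / 2) - (z1^n + z2^n) / 2"
      by (simp only: 3)
    also have "\<dots> = (z1 ^ Suc (Suc n) + z2 ^ Suc (Suc n)) / 2"
      unfolding e1 h1 h2 by (simp add: field_simps)
    finally show ?case .
  qed
  show ?thesis unfolding cheb_def using main[of n]
    by (metis Re_complex_of_real z1_def z2_def)
qed

lemma Tp_cos: "poly (Tp n) (cos th) = cos (real n * th)"
proof (induction n rule: Tp.induct)
  case (3 n)
  have a1: "real (Suc (Suc n)) * th = real (Suc n) * th + th" "real n * th = real (Suc n) * th - th"
    by (simp_all add: algebra_simps)
  have "cos (real (Suc (Suc n)) * th) + cos (real n * th) = 2 * cos (real (Suc n) * th) * cos th"
    unfolding a1 cos_add cos_diff by simp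
  then show ?case using 3 by (simp add: algebra_simps)
qed auto

lemma Tp_degree: "degree (Tp n) \<le> n"
proof (induction n rule: Tp.induct)
  case (3 n)
  have "degree ([:0,2:] * Tp (Suc n)) \<le> Suc (Suc n)"
    using degree_mult_le[of "[:0,2:]" "Tp (Suc n)"] 3 by simp
  then show ?case using 3 by (auto intro!: degree_diff_le)
qed auto

lemma deriv_poly_funpow: "(deriv ^^ k) (poly p) = poly ((pderiv ^^ k) (p :: real poly))"
proof (induction k)
  case (Suc k)
  have d: "deriv (poly q) = poly (pderiv q)" for q :: "real poly"
    by (rule ext, rule DERIV_imp_deriv, rule poly_DERIV)
  show ?case using Suc by (simp add: d)
qed simp

lemma deriv_cheb: "(deriv ^^ k) (cheb n) = poly ((pderiv ^^ k) (Tp n))"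
proof -
  have "cheb n = poly (Tp n)" by (rule ext) (simp add: Tp_cheb)
  then show ?thesis by (simp add: deriv_poly_funpow)
qed

lemma choose_step: "(d - k) * (fact k * (d choose k)) = fact (Suc k) * (d choose Suc k)"
proof -
  have "Suc k * (d choose Suc k) = (d - k) * (d choose k)"
    by (metis binomial_absorb_comp times_binomial_minus1_eq diff_Suc_1 zero_less_Suc)
  then have "(d - k) * (fact k * (d choose k)) = fact k * (Suc k * (d choose Suc k))"
    by (simp add: mult.commute mult.left_commute)
  also have "\<dots> = fact (Suc k) * (d choose Suc k)"
    by (simp only: fact_Suc) (simp add: algebra_simps)
  finally show ?thesis .
qed

lemma higher_pderiv_monom': "(pderiv ^^ k) (monom a d) = monom (of_nat (fact k * (d choose k)) * a) (d - k)"
proof (induction k)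
  case (Suc k)
  have "(pderiv ^^ Suc k) (monom a d) = pderiv (monom (of_nat (fact k * (d choose k)) * a) (d - k))"
    using Suc by simp
  also have "\<dots> = monom (of_nat (d - k) * (of_nat (fact k * (d choose k)) * a)) (d - Suc k)"
    by (simp add: pderiv_monom)
  also have "\<dots> = monom (of_nat ((d - k) * (fact k * (d choose k))) * a) (d - Suc k)"
    by (simp only: of_nat_mult mult.assoc)
  also have "\<dots> = monom (of_nat (fact (Suc k) * (d choose Suc k)) * a) (d - Suc k)"
    by (simp only: choose_step)
  finally show ?case .
qed simp

lemma poly_higher_sum:
  "poly ((pderiv ^^ k) (\<Sum>d\<le>n. monom (b d) d)) t
   = (\<Sum>d\<le>n. of_nat (fact k * (d choose k)) * t ^ (d - k) * b d)"
  by (simp add: higher_pderiv_sum poly_sum higher_pderiv_monom' poly_monom algebra_simps)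

lemma prod_neg_smult: "(\<Prod>j\<in>A. smult (-1) (f j :: real poly)) = smult ((-1) ^ card A) (prod f A)"
  unfolding prod_smult prod_constant by (rule refl)

lemma nn_coeff_prod:
  fixes f :: "'a \<Rightarrow> real poly"
  assumes "finite A" "\<And>j i. j \<in> A \<Longrightarrow> coeff (f j) i \<ge> 0"
  shows "coeff (prod f A) i \<ge> 0"
  using assms
proof (induction A arbitrary: i rule: finite_induct)
  case empty then show ?case by (simp add: coeff_1)
next
  case (insert x F)
  have "coeff (f x * prod f F) i \<ge> 0"
    unfolding coeff_mult using insert by (auto intro!: sum_nonneg mult_nonneg_nonneg)
  then show ?case using insert by simp
qed

lemma nn_coeff_higher_pderiv:
  fixes p :: "real poly"
  assumes "\<And>i. coeff p i \<ge> 0"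
  shows "coeff ((pderiv ^^ k) p) i \<ge> 0"
  unfolding coeff_higher_pderiv using assms by (simp add: pochhammer_nonneg)

lemma higher_pderiv_pcompose_lin:
  fixes p :: "real poly"
  shows "(pderiv ^^ k) (pcompose p [:t, s:]) = smult (s ^ k) (pcompose ((pderiv ^^ k) p) [:t, s:])"
proof (induction k)
  case (Suc k)
  have "(pderiv ^^ Suc k) (pcompose p [:t, s:]) = pderiv (smult (s ^ k) (pcompose ((pderiv ^^ k) p) [:t, s:]))"
    using Suc by simp
  also have "\<dots> = smult (s ^ Suc k) (pcompose ((pderiv ^^ Suc k) p) [:t, s:])"
    by (simp add: pderiv_smult pderiv_pcompose pderiv_pCons mult.commute)
  finally show ?case .
qed simp

lemma eval_via_pcompose:
  fixes p :: "real poly"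
  shows "s ^ k * poly ((pderiv ^^ k) p) t = coeff ((pderiv ^^ k) (pcompose p [:t, s:])) 0"
  by (simp add: higher_pderiv_pcompose_lin poly_0_coeff_0[symmetric] poly_pcompose)

lemma sign_up:
  fixes a :: "'a \<Rightarrow> real"
  assumes "finite A" "\<And>j. j \<in> A \<Longrightarrow> a j \<le> t"
  shows "poly ((pderiv ^^ k) (\<Prod>j\<in>A. [:- a j, 1:])) t \<ge> 0"
proof -
  have "pcompose (\<Prod>j\<in>A. [:- a j, 1:]) [:t, 1:] = (\<Prod>j\<in>A. [:t - a j, 1:])"
    by (simp add: pcompose_prod pcompose_pCons)
  moreover have "coeff ((pderiv ^^ k) (\<Prod>j\<in>A. [:t - a j, 1:])) 0 \<ge> 0"
    by (rule nn_coeff_higher_pderiv, rule nn_coeff_prod)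
       (use assms in \<open>auto simp: coeff_pCons split: nat.splits\<close>)
  ultimately show ?thesis using eval_via_pcompose[of 1 k "\<Prod>j\<in>A. [:- a j, 1:]" t] by simp
qed

lemma sign_down:
  fixes a :: "'a \<Rightarrow> real"
  assumes "finite A" "\<And>j. j \<in> A \<Longrightarrow> t \<le> a j"
  shows "(-1) ^ (card A + k) * poly ((pderiv ^^ k) (\<Prod>j\<in>A. [:- a j, 1:])) t \<ge> 0"
proof -
  have "pcompose (\<Prod>j\<in>A. [:- a j, 1:]) [:t, -1:] = (\<Prod>j\<in>A. [:t - a j, -1:])"
    by (simp add: pcompose_prod pcompose_pCons)
  also have "\<dots> = (\<Prod>j\<in>A. smult (-1) [:a j - t, 1:])"
    by (rule prod.cong) auto
  also have "\<dots> = smult ((-1) ^ card A) (\<Prod>j\<in>A. [:a j - t, 1:])"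
    by (rule prod_neg_smult)
  finally have e: "pcompose (\<Prod>j\<in>A. [:- a j, 1:]) [:t, -1:] = smult ((-1) ^ card A) (\<Prod>j\<in>A. [:a j - t, 1:])" .
  have nn: "coeff ((pderiv ^^ k) (\<Prod>j\<in>A. [:a j - t, 1:])) 0 \<ge> 0"
    by (rule nn_coeff_higher_pderiv, rule nn_coeff_prod)
       (use assms in \<open>auto simp: coeff_pCons split: nat.splits\<close>)
  have "(-1) ^ k * poly ((pderiv ^^ k) (\<Prod>j\<in>A. [:- a j, 1:])) t
      = (-1) ^ card A * coeff ((pderiv ^^ k) (\<Prod>j\<in>A. [:a j - t, 1:])) 0"
    using eval_via_pcompose[of "-1" k "\<Prod>j\<in>A. [:- a j, 1:]" t] by (simp only: e higher_pderiv_smult coeff_smult)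
  then have eq: "(-1) ^ k * poly ((pderiv ^^ k) (\<Prod>j\<in>A. [:- a j, 1:])) t
      = (-1) ^ card A * coeff ((pderiv ^^ k) (\<Prod>j\<in>A. [:a j - t, 1:])) 0" .
  have m1: "((-1::real) ^ card A) * (-1) ^ card A = 1"
    by (simp flip: power_mult_distrib)
  have "(-1) ^ (card A + k) * poly ((pderiv ^^ k) (\<Prod>j\<in>A. [:- a j, 1:])) t
      = (-1) ^ card A * ((-1) ^ k * poly ((pderiv ^^ k) (\<Prod>j\<in>A. [:- a j, 1:])) t)"
    by (simp only: power_add mult.assoc)
  also have "\<dots> = ((-1) ^ card A * (-1) ^ card A) * coeff ((pderiv ^^ k) (\<Prod>j\<in>A. [:a j - t, 1:])) 0"
    by (simp only: eq mult.assoc)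
  also have "\<dots> = coeff ((pderiv ^^ k) (\<Prod>j\<in>A. [:a j - t, 1:])) 0"
    by (simp only: m1 mult_1)
  finally show ?thesis using nn by simp
qed

definition eta :: "nat \<Rightarrow> nat \<Rightarrow> real" where "eta n i = cos (real i * pi / real n)"
definition Lp :: "nat \<Rightarrow> nat \<Rightarrow> real poly" where "Lp n i = (\<Prod>j\<in>{..n}-{i}. [:- eta n j, 1:])"

lemma eta_less: assumes "i < j" "j \<le> n" shows "eta n j < eta n i"
proof -
  have n: "real n > 0" using assms by simp
  show ?thesis unfolding eta_def
  proof (rule cos_monotone_0_pi)
    show "0 \<le> real i * pi / real n" using n by simp
    show "real i * pi / real n < real j * pi / real n" using n assms by (simp add: divide_strict_right_mono)
    show "real j * pi / real n \<le> pi" using n assms by (simp add: field_simps)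
  qed
qed

lemma eta_inj: "inj_on (eta n) {..n}"
proof (rule inj_onI)
  fix i j assume "i \<in> {..n}" "j \<in> {..n}" "eta n i = eta n j"
  then show "i = j" using eta_less[of i j n] eta_less[of j i n]
    by (cases i j rule: linorder_cases) auto
qed

lemma eta_bound: "\<bar>eta n i\<bar> \<le> 1"
  unfolding eta_def by (rule abs_cos_le_one)

lemma Tp_eta: assumes "i \<le> n" shows "poly (Tp n) (eta n i) = (-1) ^ i"
proof (cases "n = 0")
  case True then show ?thesis using assms by (simp add: eta_def)
next
  case False
  have "real n * (real i * pi / real n) = real i * pi" using False by simp
  then show ?thesis unfolding eta_def Tp_cos by simp
qed

lemma Lp_root: assumes "j \<le> n" "j \<noteq> i" shows "poly (Lp n i) (eta n j) = 0"
  unfolding Lp_def poly_prod using assms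
  by (intro prod_zero) auto

lemma card_Lset: assumes "i \<le> n" shows "card ({..n}-{i}) = n"
  using assms by (simp add: card_Diff_singleton)

lemma Lp_degree: assumes "i \<le> n" shows "degree (Lp n i) \<le> n"
proof -
  have "degree (Lp n i) \<le> sum (degree \<circ> (\<lambda>j. [:- eta n j, 1:])) ({..n}-{i})"
    unfolding Lp_def by (rule degree_prod_sum_le) simp
  also have "\<dots> = card ({..n}-{i})" by simp
  finally show ?thesis using card_Lset[OF assms] by simp
qed

lemma Lp_sign: assumes "i \<le> n" shows "(-1) ^ i * poly (Lp n i) (eta n i) > 0"
proof -
  have split: "{..n}-{i} = {..<i} \<union> {i<..n}" using assms by auto
  have "poly (Lp n i) (eta n i) = (\<Prod>j\<in>{..n}-{i}. eta n i - eta n j)"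
    unfolding Lp_def poly_prod by simp
  also have "\<dots> = (\<Prod>j\<in>{..<i}. eta n i - eta n j) * (\<Prod>j\<in>{i<..n}. eta n i - eta n j)"
    unfolding split by (rule prod.union_disjoint) auto
  finally have e: "poly (Lp n i) (eta n i) = (\<Prod>j\<in>{..<i}. eta n i - eta n j) * (\<Prod>j\<in>{i<..n}. eta n i - eta n j)" .
  have m: "(-1::real) ^ i = (\<Prod>j\<in>{..<i}. -1)" by simp
  have "(-1) ^ i * (\<Prod>j\<in>{..<i}. eta n i - eta n j) = (\<Prod>j\<in>{..<i}. (-1) * (eta n i - eta n j))"
    unfolding m by (rule prod.distrib[symmetric])
  also have "\<dots> = (\<Prod>j\<in>{..<i}. eta n j - eta n i)" by simp
  also have "\<dots> > 0" using eta_less assms by (intro prod_pos) auto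
  finally have p1: "(-1) ^ i * (\<Prod>j\<in>{..<i}. eta n i - eta n j) > 0" .
  have p2: "(\<Prod>j\<in>{i<..n}. eta n i - eta n j) > 0" using eta_less by (intro prod_pos) auto
  show ?thesis unfolding e using p1 p2 by (simp add: mult.assoc[symmetric])
qed

lemma Lp_eta_nz: "i \<le> n \<Longrightarrow> poly (Lp n i) (eta n i) \<noteq> 0"
  using Lp_sign[of i n] by auto

lemma lagrange:
  assumes "degree p \<le> n"
  shows "p = (\<Sum>i\<le>n. smult (poly p (eta n i) / poly (Lp n i) (eta n i)) (Lp n i))"
proof (rule poly_eqI_degree[where A = "eta n ` {..n}"])
  have c: "card (eta n ` {..n}) = Suc n" using eta_inj by (simp add: card_image)
  show "degree p < card (eta n ` {..n})" using assms c by simp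
  have "degree (\<Sum>i\<le>n. smult (poly p (eta n i) / poly (Lp n i) (eta n i)) (Lp n i)) \<le> n"
  proof (rule degree_sum_le)
    fix i assume "i \<in> {..n}"
    then show "degree (smult (poly p (eta n i) / poly (Lp n i) (eta n i)) (Lp n i)) \<le> n"
      using degree_smult_le[of "poly p (eta n i) / poly (Lp n i) (eta n i)" "Lp n i"] Lp_degree[of i n] by simp
  qed simp
  then show "degree (\<Sum>i\<le>n. smult (poly p (eta n i) / poly (Lp n i) (eta n i)) (Lp n i)) < card (eta n ` {..n})"
    using c by simp
  fix x assume "x \<in> eta n ` {..n}"
  then obtain m where m: "m \<le> n" "x = eta n m" by auto
  have "poly (\<Sum>i\<le>n. smult (poly p (eta n i) / poly (Lp n i) (eta n i)) (Lp n i)) x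
     = (\<Sum>i\<le>n. poly p (eta n i) / poly (Lp n i) (eta n i) * poly (Lp n i) (eta n m))"
    by (simp add: poly_sum m)
  also have "\<dots> = poly p (eta n m) / poly (Lp n m) (eta n m) * poly (Lp n m) (eta n m)"
    by (subst sum.mono_neutral_right[of "{..n}" "{m}"]) (use m Lp_root in auto)
  also have "\<dots> = poly p x" using Lp_eta_nz[OF m(1)] m by simp
  finally show "poly p x = poly (\<Sum>i\<le>n. smult (poly p (eta n i) / poly (Lp n i) (eta n i)) (Lp n i)) x" by simp
qed

lemma lagrange_deriv:
  assumes "degree p \<le> n"
  shows "poly ((pderiv ^^ k) p) t = (\<Sum>i\<le>n. poly p (eta n i) * (poly ((pderiv ^^ k) (Lp n i)) t / poly (Lp n i) (eta n i)))"
proof -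
  have "poly ((pderiv ^^ k) p) t = poly ((pderiv ^^ k) (\<Sum>i\<le>n. smult (poly p (eta n i) / poly (Lp n i) (eta n i)) (Lp n i))) t"
    using lagrange[OF assms] by simp
  also have "\<dots> = (\<Sum>i\<le>n. poly p (eta n i) * (poly ((pderiv ^^ k) (Lp n i)) t / poly (Lp n i) (eta n i)))"
    by (simp add: higher_pderiv_sum higher_pderiv_smult poly_sum)
  finally show ?thesis .
qed

lemma core:
  fixes p :: "real poly"
  assumes deg: "degree p \<le> n" and t: "1 \<le> \<bar>t\<bar>" and M: "\<And>s. \<bar>s\<bar> \<le> 1 \<Longrightarrow> \<bar>poly p s\<bar> \<le> M"
  shows "\<bar>poly ((pderiv ^^ k) p) t\<bar> \<le> \<bar>poly ((pderiv ^^ k) (Tp n)) t\<bar> * M"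
proof -
  define D where "D i = poly ((pderiv ^^ k) (Lp n i)) t / poly (Lp n i) (eta n i)" for i
  have hp: "poly ((pderiv ^^ k) p) t = (\<Sum>i\<le>n. poly p (eta n i) * D i)"
    unfolding D_def by (rule lagrange_deriv[OF deg])
  have hT: "poly ((pderiv ^^ k) (Tp n)) t = (\<Sum>i\<le>n. (-1) ^ i * D i)"
    unfolding D_def using lagrange_deriv[OF Tp_degree[of n], of k t] Tp_eta by simp
  obtain \<sigma> :: real where sg: "\<bar>\<sigma>\<bar> = 1" "\<And>i. i \<le> n \<Longrightarrow> \<sigma> * poly ((pderiv ^^ k) (Lp n i)) t \<ge> 0"
  proof (cases "t \<ge> 1")
    case True
    show ?thesis
    proof (rule that[of 1])
      fix i assume "i \<le> n"
      show "1 * poly ((pderiv ^^ k) (Lp n i)) t \<ge> 0"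
        unfolding Lp_def using True eta_bound[of n] by (auto intro!: sign_up simp: abs_le_iff intro: order.trans)
    qed simp
  next
    case False
    then have tm: "t \<le> -1" using t by auto
    show ?thesis
    proof (rule that[of "(-1) ^ (n + k)"])
      fix i assume i: "i \<le> n"
      have "(-1) ^ (card ({..n}-{i}) + k) * poly ((pderiv ^^ k) (Lp n i)) t \<ge> 0"
        unfolding Lp_def using tm eta_bound[of n] by (auto intro!: sign_down simp: abs_le_iff intro: order.trans)
      then show "(-1) ^ (n + k) * poly ((pderiv ^^ k) (Lp n i)) t \<ge> 0"
        using card_Lset[OF i] by simp
    qed simp
  qed
  have pos: "\<sigma> * ((-1) ^ i * D i) \<ge> 0" if i: "i \<le> n" for i
  proof -
    have "\<sigma> * ((-1) ^ i * D i) = (\<sigma> * poly ((pderiv ^^ k) (Lp n i)) t) / ((-1) ^ i * poly (Lp n i) (eta n i))"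
      unfolding D_def by (cases "even i") simp_all
    also have "\<dots> \<ge> 0" using sg(2)[OF i] Lp_sign[OF i] by simp
    finally show ?thesis .
  qed
  have absD: "\<bar>D i\<bar> = \<sigma> * ((-1) ^ i * D i)" if i: "i \<le> n" for i
  proof -
    have "\<bar>\<sigma> * ((-1) ^ i * D i)\<bar> = \<bar>D i\<bar>" using sg(1) by (simp add: abs_mult power_abs)
    then show ?thesis using pos[OF i] by simp
  qed
  have T: "\<bar>poly ((pderiv ^^ k) (Tp n)) t\<bar> = (\<Sum>i\<le>n. \<bar>D i\<bar>)"
  proof -
    have "\<bar>poly ((pderiv ^^ k) (Tp n)) t\<bar> = \<bar>\<sigma> * poly ((pderiv ^^ k) (Tp n)) t\<bar>"
      using sg(1) by (simp add: abs_mult)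
    also have "\<sigma> * poly ((pderiv ^^ k) (Tp n)) t = (\<Sum>i\<le>n. \<sigma> * ((-1) ^ i * D i))"
      unfolding hT by (simp add: sum_distrib_left)
    also have "\<dots> = (\<Sum>i\<le>n. \<bar>D i\<bar>)" using absD by simp
    finally show ?thesis by simp
  qed
  have "\<bar>poly ((pderiv ^^ k) p) t\<bar> \<le> (\<Sum>i\<le>n. \<bar>poly p (eta n i) * D i\<bar>)"
    unfolding hp by (rule sum_abs)
  also have "\<dots> \<le> (\<Sum>i\<le>n. M * \<bar>D i\<bar>)"
    by (rule sum_mono) (simp add: abs_mult mult_right_mono M eta_bound)
  also have "\<dots> = \<bar>poly ((pderiv ^^ k) (Tp n)) t\<bar> * M"
    unfolding T by (simp add: sum_distrib_left mult.commute)
  finally show ?thesis .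
qed

lemma uni_complex:
  fixes b :: "nat \<Rightarrow> complex"
  assumes t: "1 \<le> \<bar>t\<bar>"
    and M: "\<And>s. \<bar>s\<bar> \<le> 1 \<Longrightarrow> cmod (\<Sum>d\<le>n. complex_of_real (s ^ d) * b d) \<le> M"
  shows "cmod (\<Sum>d\<le>n. of_nat (fact k * (d choose k)) * complex_of_real (t ^ (d - k)) * b d)
         \<le> \<bar>poly ((pderiv ^^ k) (Tp n)) t\<bar> * M"
proof -
  define z where "z = (\<Sum>d\<le>n. of_nat (fact k * (d choose k)) * complex_of_real (t ^ (d - k)) * b d)"
  define w where "w = (if z = 0 then 1 else cnj z / complex_of_real (cmod z))"
  have w1: "cmod w = 1"
    unfolding w_def by (auto simp: norm_divide)
  have wz: "w * z = complex_of_real (cmod z)"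
  proof (cases "z = 0")
    case False
    then have nz: "complex_of_real (cmod z) \<noteq> 0" by simp
    have "w * z = (z * cnj z) / complex_of_real (cmod z)"
      unfolding w_def using False by (simp add: mult.commute)
    also have "\<dots> = complex_of_real ((cmod z) ^ 2) / complex_of_real (cmod z)"
      by (simp only: complex_norm_square)
    also have "\<dots> = complex_of_real (cmod z)"
      using nz by (simp add: power2_eq_square)
    finally show ?thesis .
  qed (simp add: w_def)
  define br where "br d = Re (w * b d)" for d
  define p where "p = (\<Sum>d\<le>n. monom (br d) d)"
  have deg: "degree p \<le> n"
    unfolding p_def by (rule degree_sum_le) (auto intro: order.trans[OF degree_monom_le])
  have pv: "poly p s = Re (w * (\<Sum>d\<le>n. complex_of_real (s ^ d) * b d))" for s
    unfolding p_def br_def by (simp add: poly_sum poly_monom sum_distrib_left algebra_simps)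
  have pM: "\<bar>poly p s\<bar> \<le> M" if "\<bar>s\<bar> \<le> 1" for s
  proof -
    have "\<bar>poly p s\<bar> \<le> cmod (w * (\<Sum>d\<le>n. complex_of_real (s ^ d) * b d))"
      unfolding pv by (rule abs_Re_le_cmod)
    also have "\<dots> = cmod (\<Sum>d\<le>n. complex_of_real (s ^ d) * b d)" by (simp add: norm_mult w1)
    also have "\<dots> \<le> M" by (rule M[OF that])
    finally show ?thesis .
  qed
  have "poly ((pderiv ^^ k) p) t = (\<Sum>d\<le>n. of_nat (fact k * (d choose k)) * t ^ (d - k) * br d)"
    unfolding p_def by (rule poly_higher_sum)
  also have "\<dots> = Re (w * z)"
    unfolding z_def br_def by (simp add: sum_distrib_left) (rule sum.cong, simp_all add: algebra_simps)
  also have "\<dots> = cmod z" by (simp add: wz)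
  finally have e: "poly ((pderiv ^^ k) p) t = cmod z" .
  show ?thesis
    using core[OF deg t pM, of k] e unfolding z_def by simp
qed

lemma uni_scaled:
  fixes b :: "nat \<Rightarrow> complex"
  assumes lam: "lam > 0" and x: "lam \<le> \<bar>x\<bar>"
    and M: "\<And>s. \<bar>s\<bar> \<le> lam \<Longrightarrow> cmod (\<Sum>d\<le>n. complex_of_real (s ^ d) * b d) \<le> M"
  shows "cmod (\<Sum>d\<le>n. of_nat (fact k * (d choose k)) * complex_of_real (x ^ (d - k)) * b d)
         \<le> inverse (lam ^ k) * \<bar>poly ((pderiv ^^ k) (Tp n)) (x / lam)\<bar> * M"
proof -
  define b' where "b' d = complex_of_real (lam ^ d) * b d" for d
  have t: "1 \<le> \<bar>x / lam\<bar>" using lam x by (simp add: abs_divide le_divide_eq)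
  have M': "cmod (\<Sum>d\<le>n. complex_of_real (s ^ d) * b' d) \<le> M" if "\<bar>s\<bar> \<le> 1" for s
  proof -
    have "(\<Sum>d\<le>n. complex_of_real (s ^ d) * b' d) = (\<Sum>d\<le>n. complex_of_real ((lam * s) ^ d) * b d)"
      unfolding b'_def by (rule sum.cong) (simp_all add: power_mult_distrib)
    moreover have "\<bar>lam * s\<bar> \<le> lam" using that lam by (simp add: abs_mult mult_left_le)
    ultimately show ?thesis using M[of "lam * s"] by simp
  qed
  have tm: "of_nat (fact k * (d choose k)) * complex_of_real ((x / lam) ^ (d - k)) * b' d
      = complex_of_real (lam ^ k) * (of_nat (fact k * (d choose k)) * complex_of_real (x ^ (d - k)) * b d)" for d
  proof (cases "k \<le> d")
    case True
    have "(x / lam) ^ (d - k) * lam ^ d = lam ^ k * x ^ (d - k)"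
    proof -
      have l1: "lam ^ d = lam ^ (d - k) * lam ^ k" using True by (simp flip: power_add)
      have l2: "(x / lam) ^ (d - k) * lam ^ (d - k) = x ^ (d - k)"
        using lam by (simp add: power_divide)
      have "(x / lam) ^ (d - k) * (lam ^ (d - k) * lam ^ k) = ((x / lam) ^ (d - k) * lam ^ (d - k)) * lam ^ k"
        by (simp only: mult.assoc)
      then show ?thesis unfolding l1 l2 by (simp only: mult.commute)
    qed
    then have "complex_of_real ((x / lam) ^ (d - k)) * complex_of_real (lam ^ d)
        = complex_of_real (lam ^ k) * complex_of_real (x ^ (d - k))"
      by (simp only: of_real_mult[symmetric])
    then have eq: "complex_of_real ((x / lam) ^ (d - k)) * complex_of_real (lam ^ d)
        = complex_of_real (lam ^ k) * complex_of_real (x ^ (d - k))" .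
    have "of_nat (fact k * (d choose k)) * complex_of_real ((x / lam) ^ (d - k)) * b' d
       = of_nat (fact k * (d choose k)) * (complex_of_real ((x / lam) ^ (d - k)) * complex_of_real (lam ^ d)) * b d"
      unfolding b'_def by (simp only: mult.assoc)
    also have "\<dots> = of_nat (fact k * (d choose k)) * (complex_of_real (lam ^ k) * complex_of_real (x ^ (d - k))) * b d"
      by (simp only: eq)
    also have "\<dots> = complex_of_real (lam ^ k) * (of_nat (fact k * (d choose k)) * complex_of_real (x ^ (d - k)) * b d)"
      by (simp only: ac_simps)
    finally show ?thesis .
  next
    case False then show ?thesis by simp
  qed
  have A: "cmod (\<Sum>d\<le>n. of_nat (fact k * (d choose k)) * complex_of_real ((x / lam) ^ (d - k)) * b' d)
        \<le> \<bar>poly ((pderiv ^^ k) (Tp n)) (x / lam)\<bar> * M"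
    by (rule uni_complex[OF t M'])
  have B: "(\<Sum>d\<le>n. of_nat (fact k * (d choose k)) * complex_of_real ((x / lam) ^ (d - k)) * b' d)
      = complex_of_real (lam ^ k) * (\<Sum>d\<le>n. of_nat (fact k * (d choose k)) * complex_of_real (x ^ (d - k)) * b d)"
    unfolding tm by (rule sum_distrib_left[symmetric])
  have C: "cmod (complex_of_real (lam ^ k) * (\<Sum>d\<le>n. of_nat (fact k * (d choose k)) * complex_of_real (x ^ (d - k)) * b d))
     = lam ^ k * cmod (\<Sum>d\<le>n. of_nat (fact k * (d choose k)) * complex_of_real (x ^ (d - k)) * b d)"
    using lam by (simp only: norm_mult norm_of_real abs_of_pos zero_less_power)
  have "lam ^ k * cmod (\<Sum>d\<le>n. of_nat (fact k * (d choose k)) * complex_of_real (x ^ (d - k)) * b d)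
        \<le> \<bar>poly ((pderiv ^^ k) (Tp n)) (x / lam)\<bar> * M"
    using A unfolding B C .
  then have "inverse (lam ^ k) * (lam ^ k * cmod (\<Sum>d\<le>n. of_nat (fact k * (d choose k)) * complex_of_real (x ^ (d - k)) * b d))
        \<le> inverse (lam ^ k) * (\<bar>poly ((pderiv ^^ k) (Tp n)) (x / lam)\<bar> * M)"
    by (rule mult_left_mono) (use lam in simp)
  moreover have "inverse (lam ^ k) * (lam ^ k * cmod (\<Sum>d\<le>n. of_nat (fact k * (d choose k)) * complex_of_real (x ^ (d - k)) * b d))
     = cmod (\<Sum>d\<le>n. of_nat (fact k * (d choose k)) * complex_of_real (x ^ (d - k)) * b d)"
  proof -
    have i1: "inverse (lam ^ k) * lam ^ k = 1" using lam by simp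
    show ?thesis by (simp only: mult.assoc[symmetric] i1 mult_1)
  qed
  ultimately show ?thesis by (simp only: mult.assoc)
qed

lemma Qdeg_PiE: "Qdeg n = PiE UNIV (\<lambda>_. {..n})"
  by (auto simp: Qdeg_def PiE_UNIV_domain)

lemma Qdeg_finite: "finite (Qdeg n :: ('m::finite \<Rightarrow> nat) set)"
  unfolding Qdeg_PiE by (rule finite_PiE) auto

lemma regroup:
  fixes c :: "('m::finite \<Rightarrow> nat) \<Rightarrow> complex" and w :: "'m \<Rightarrow> nat \<Rightarrow> complex"
  shows "(\<Sum>a\<in>Qdeg n. c a * (\<Prod>j\<in>UNIV. w j (a j)))
       = (\<Sum>d\<le>n. w i d * (\<Sum>a\<in>{a\<in>Qdeg n. a i = d}. c a * (\<Prod>j\<in>UNIV-{i}. w j (a j))))"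
proof -
  have "(\<Sum>a\<in>Qdeg n. c a * (\<Prod>j\<in>UNIV. w j (a j)))
      = (\<Sum>d\<le>n. \<Sum>a\<in>{a\<in>Qdeg n. a i = d}. c a * (\<Prod>j\<in>UNIV. w j (a j)))"
    by (rule sum.group[symmetric]) (use Qdeg_finite in \<open>auto simp: Qdeg_def\<close>)
  also have "\<dots> = (\<Sum>d\<le>n. w i d * (\<Sum>a\<in>{a\<in>Qdeg n. a i = d}. c a * (\<Prod>j\<in>UNIV-{i}. w j (a j))))"
  proof (rule sum.cong[OF refl])
    fix d
    have eq: "c a * (\<Prod>j\<in>UNIV. w j (a j)) = w i d * (c a * (\<Prod>j\<in>UNIV-{i}. w j (a j)))"
      if "a \<in> {a\<in>Qdeg n. a i = d}" for a
    proof -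
      have "(\<Prod>j\<in>UNIV. w j (a j)) = w i (a i) * (\<Prod>j\<in>UNIV-{i}. w j (a j))"
        by (rule prod.remove) auto
      then show ?thesis using that by simp
    qed
    show "(\<Sum>a\<in>{a\<in>Qdeg n. a i = d}. c a * (\<Prod>j\<in>UNIV. w j (a j)))
        = w i d * (\<Sum>a\<in>{a\<in>Qdeg n. a i = d}. c a * (\<Prod>j\<in>UNIV-{i}. w j (a j)))"
      unfolding sum_distrib_left by (rule sum.cong[OF refl]) (rule eq)
  qed
  finally show ?thesis .
qed

lemma tensor:
  fixes c :: "('m::finite \<Rightarrow> nat) \<Rightarrow> complex" and l :: "'m \<Rightarrow> nat \<Rightarrow> complex" and C :: "'m \<Rightarrow> real"
  assumes uni: "\<And>j b M'. (\<And>s. \<bar>s\<bar> \<le> lam \<Longrightarrow> cmod (\<Sum>d\<le>n. complex_of_real (s ^ d) * b d) \<le> M')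
      \<Longrightarrow> cmod (\<Sum>d\<le>n. l j d * b d) \<le> C j * M'"
    and bound: "\<And>y. (\<And>j. \<bar>y $ j\<bar> \<le> lam) \<Longrightarrow> cmod (mpoly_eval (Qdeg n) c y) \<le> M"
  shows "cmod (\<Sum>a\<in>Qdeg n. c a * (\<Prod>j\<in>UNIV. l j (a j))) \<le> (\<Prod>j\<in>UNIV. C j) * M"
proof -
  define W where "W S y j d = (if j \<in> S then l j d else complex_of_real ((y $ j) ^ d))"
    for S and y :: "real^'m" and j d
  have main: "\<forall>y. (\<forall>j. j \<notin> S \<longrightarrow> \<bar>y $ j\<bar> \<le> lam) \<longrightarrow>
      cmod (\<Sum>a\<in>Qdeg n. c a * (\<Prod>j\<in>UNIV. W S y j (a j))) \<le> (\<Prod>j\<in>S. C j) * M"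
    if "finite S" for S
    using that
  proof (induction S rule: finite_induct)
    case empty
    show ?case
    proof (intro allI impI)
      fix y :: "real^'m" assume "\<forall>j. j \<notin> {} \<longrightarrow> \<bar>y $ j\<bar> \<le> lam"
      then have "cmod (mpoly_eval (Qdeg n) c y) \<le> M" by (intro bound) auto
      then show "cmod (\<Sum>a\<in>Qdeg n. c a * (\<Prod>j\<in>UNIV. W {} y j (a j))) \<le> (\<Prod>j\<in>{}. C j) * M"
        unfolding W_def mpoly_eval_def by simp
    qed
  next
    case (insert i S)
    show ?case
    proof (intro allI impI)
      fix y :: "real^'m" assume hy: "\<forall>j. j \<notin> insert i S \<longrightarrow> \<bar>y $ j\<bar> \<le> lam"
      define B where "B d = (\<Sum>a\<in>{a\<in>Qdeg n. a i = d}. c a * (\<Prod>j\<in>UNIV-{i}. W S y j (a j)))" for d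
      have Bs: "cmod (\<Sum>d\<le>n. complex_of_real (s ^ d) * B d) \<le> (\<Prod>j\<in>S. C j) * M" if s: "\<bar>s\<bar> \<le> lam" for s
      proof -
        define y' where "y' = (\<chi> j. if j = i then s else y $ j)"
        have hy': "\<forall>j. j \<notin> S \<longrightarrow> \<bar>y' $ j\<bar> \<le> lam" using hy s by (auto simp: y'_def)
        have W1: "W S y' i d = complex_of_real (s ^ d)" for d
          using insert.hyps(2) by (simp add: W_def y'_def)
        have W2: "W S y' j = W S y j" if "j \<in> UNIV - {i}" for j
          using that by (auto simp: W_def y'_def fun_eq_iff)
        have "(\<Sum>a\<in>Qdeg n. c a * (\<Prod>j\<in>UNIV. W S y' j (a j))) = (\<Sum>d\<le>n. complex_of_real (s ^ d) * B d)"
          unfolding regroup[of c "W S y'" n i] W1 B_def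
          by (intro sum.cong refl arg_cong2[where f = "(*)"] prod.cong) (auto simp: W2)
        then show ?thesis using insert.IH hy' by auto
      qed
      have "cmod (\<Sum>d\<le>n. l i d * B d) \<le> C i * ((\<Prod>j\<in>S. C j) * M)"
        by (rule uni) (rule Bs)
      moreover have "(\<Sum>a\<in>Qdeg n. c a * (\<Prod>j\<in>UNIV. W (insert i S) y j (a j))) = (\<Sum>d\<le>n. l i d * B d)"
      proof -
        have V1: "W (insert i S) y i = l i" by (simp add: W_def fun_eq_iff)
        have V2: "W (insert i S) y j = W S y j" if "j \<in> UNIV - {i}" for j
          using that by (auto simp: W_def fun_eq_iff)
        show ?thesis
          unfolding regroup[of c "W (insert i S) y" n i] V1 B_def
          by (intro sum.cong refl arg_cong2[where f = "(*)"] prod.cong) (auto simp: V2)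
      qed
      moreover have "(\<Prod>j\<in>insert i S. C j) = C i * (\<Prod>j\<in>S. C j)"
        using insert.hyps by simp
      ultimately show "cmod (\<Sum>a\<in>Qdeg n. c a * (\<Prod>j\<in>UNIV. W (insert i S) y j (a j))) \<le> (\<Prod>j\<in>insert i S. C j) * M"
        by (simp add: mult.assoc)
    qed
  qed
  have "W UNIV 0 = l" by (simp add: W_def fun_eq_iff)
  then show ?thesis using main[of UNIV] by auto
qed

lemma mpoly_bdd:
  fixes K :: "(real^'m::finite) set"
  assumes "compact K"
  shows "bdd_above ((\<lambda>y. cmod (mpoly_eval S c y)) ` K)"
proof -
  have "continuous_on K (\<lambda>y. cmod (mpoly_eval S c y))"
    unfolding mpoly_eval_def by (intro continuous_intros)
  then have "compact ((\<lambda>y. cmod (mpoly_eval S c y)) ` K)"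
    using assms by (rule compact_continuous_image)
  then show ?thesis by (intro bounded_imp_bdd_above compact_imp_bounded)
qed

lemma aux: "(\<bar>a\<bar> \<le> lam) = (- lam \<le> a \<and> a \<le> (lam::real))" by auto

lemma cube_compact: "compact (cube lam :: (real^'m::finite) set)"
proof -
  have "cube lam = cbox (\<chi> _. - lam) (\<chi> _. lam :: real^'m)"
    by (auto simp: cube_def mem_box_cart aux)
  then show ?thesis by simp
qed

lemma partb:
  fixes x :: "real^'m::finite" and c :: "('m \<Rightarrow> nat) \<Rightarrow> complex" and k :: "'m \<Rightarrow> nat"
  assumes lam: "lam > 0" and x: "\<forall>j. \<bar>x$j\<bar> > lam"
  shows "cmod (mpoly_deriv (Qdeg n) c k x)
         \<le> inverse (lam ^ (\<Sum>j\<in>UNIV. k j))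
            * \<bar>\<Prod>j\<in>UNIV. (deriv ^^ k j) (cheb n) (x$j / lam)\<bar>
            * (SUP y\<in>cube lam. cmod (mpoly_eval (Qdeg n) c y))"
proof -
  define M where "M = (SUP y\<in>cube lam. cmod (mpoly_eval (Qdeg n) c y))"
  define l where "l j d = of_nat (fact (k j) * (d choose k j)) * complex_of_real ((x$j) ^ (d - k j))" for j d
  define C where "C j = inverse (lam ^ k j) * \<bar>poly ((pderiv ^^ k j) (Tp n)) (x$j / lam)\<bar>" for j
  have bound: "cmod (mpoly_eval (Qdeg n) c y) \<le> M" if "\<And>j. \<bar>y $ j\<bar> \<le> lam" for y
  proof -
    have bdd: "bdd_above ((\<lambda>y. cmod (mpoly_eval (Qdeg n) c y)) ` cube lam)"
      by (rule mpoly_bdd[OF cube_compact])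
    show ?thesis unfolding M_def
      by (rule cSUP_upper[OF _ bdd]) (use that in \<open>simp add: cube_def\<close>)
  qed
  have uni: "cmod (\<Sum>d\<le>n. l j d * b d) \<le> C j * M'"
    if "\<And>s. \<bar>s\<bar> \<le> lam \<Longrightarrow> cmod (\<Sum>d\<le>n. complex_of_real (s ^ d) * b d) \<le> M'" for j b M'
  proof -
    have xj: "lam \<le> \<bar>x$j\<bar>" using x less_imp_le by blast
    show ?thesis unfolding l_def C_def by (rule uni_scaled[OF lam xj that])
  qed
  have "cmod (\<Sum>a\<in>Qdeg n. c a * (\<Prod>j\<in>UNIV. l j (a j))) \<le> (\<Prod>j\<in>UNIV. C j) * M"
    by (rule tensor[OF uni bound])
  moreover have "mpoly_deriv (Qdeg n) c k x = (\<Sum>a\<in>Qdeg n. c a * (\<Prod>j\<in>UNIV. l j (a j)))"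
    unfolding mpoly_deriv_def l_def ..
  moreover have "(\<Prod>j\<in>UNIV. C j) = inverse (lam ^ (\<Sum>j\<in>UNIV. k j)) * \<bar>\<Prod>j\<in>UNIV. (deriv ^^ k j) (cheb n) (x$j / lam)\<bar>"
  proof -
    have pi: "(\<Prod>j\<in>UNIV. inverse (lam ^ k j)) = inverse (\<Prod>j\<in>UNIV. lam ^ k j)"
      using prod_inversef[of "\<lambda>j. lam ^ k j" UNIV] by (simp add: o_def)
    show ?thesis unfolding C_def deriv_cheb
      by (simp add: prod.distrib power_sum abs_prod pi)
  qed
  ultimately show ?thesis unfolding M_def by simp
qed

lemma cheb_nonneg: assumes "1 \<le> t" shows "cheb n t \<ge> 0"
proof -
  define s where "s = sqrt (t^2 - 1)"
  have t2: "t^2 - 1 \<ge> 0" using assms by (simp add: one_le_power)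
  have cs: "csqrt (complex_of_real (t^2 - 1)) = complex_of_real s"
    unfolding s_def by (rule csqrt_of_real[OF t2])
  have st: "s \<le> t"
  proof -
    have "s \<le> sqrt (t^2)" unfolding s_def by (rule real_sqrt_le_mono) simp
    then show ?thesis using assms by simp
  qed
  have s0: "s \<ge> 0" unfolding s_def using t2 by simp
  have "cheb n t = Re (complex_of_real (((t + s)^n + (t - s)^n) / 2))"
    unfolding cheb_def cs by simp
  also have "\<dots> = ((t + s)^n + (t - s)^n) / 2" by (rule Re_complex_of_real)
  also have "\<dots> \<ge> 0" using st s0 assms by simp
  finally show ?thesis .
qed

lemma inner_bdd:
  fixes V :: "(real^'m::finite) set"
  assumes "compact V"
  shows "bdd_above ((\<lambda>y. u \<bullet> y) ` V)" "bdd_below ((\<lambda>y. u \<bullet> y) ` V)"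
proof -
  have "continuous_on V (\<lambda>y. u \<bullet> y)" by (intro continuous_intros)
  then have "compact ((\<lambda>y. u \<bullet> y) ` V)" using assms by (rule compact_continuous_image)
  then have "bounded ((\<lambda>y. u \<bullet> y) ` V)" by (rule compact_imp_bounded)
  then show "bdd_above ((\<lambda>y. u \<bullet> y) ` V)" "bdd_below ((\<lambda>y. u \<bullet> y) ` V)"
    by (auto intro: bounded_imp_bdd_above bounded_imp_bdd_below)
qed

lemma H_ge: fixes V :: "(real^'m::finite) set" and u z :: "real^'m"
  assumes u: "norm u = 1" and r: "r > 0" "ball z r \<subseteq> V" and sym: "\<forall>y\<in>V. - y \<in> V"
  and ba: "\<And>u. bdd_above ((\<lambda>y. u \<bullet> y) ` V)" and bb: "\<And>u. bdd_below ((\<lambda>y. u \<bullet> y) ` V)"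
  shows "(SUP y\<in>V. u \<bullet> y) - (INF y\<in>V. u \<bullet> y) \<ge> r"
proof -
    have uu: "u \<bullet> u = 1" using u power2_norm_eq_inner[of u] by simp
    define p1 where "p1 = z + (r/2) *\<^sub>R u"
    define p2 where "p2 = z - (r/2) *\<^sub>R u"
    have p1V: "p1 \<in> V" using r u unfolding p1_def by (intro subsetD[OF r(2)]) (simp add: dist_norm)
    have p2V: "p2 \<in> V" using r u unfolding p2_def by (intro subsetD[OF r(2)]) (simp add: dist_norm)
    have mp2V: "- p2 \<in> V" using sym p2V by blast
    have mp1V: "- p1 \<in> V" using sym p1V by blast
    have e1: "u \<bullet> p1 + u \<bullet> (- p2) = r" unfolding p1_def p2_def
      by (simp add: inner_add_right inner_diff_right uu)
    have e2: "u \<bullet> (- p1) + u \<bullet> p2 = - r" unfolding p1_def p2_def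
      by (simp add: inner_add_right inner_diff_right uu)
    have s1: "u \<bullet> p1 \<le> (SUP y\<in>V. u \<bullet> y)" by (rule cSUP_upper[OF p1V ba])
    have s2: "u \<bullet> (- p2) \<le> (SUP y\<in>V. u \<bullet> y)" by (rule cSUP_upper[OF mp2V ba])
    have i1: "(INF y\<in>V. u \<bullet> y) \<le> u \<bullet> (- p1)" by (rule cINF_lower[OF bb mp1V])
    have i2: "(INF y\<in>V. u \<bullet> y) \<le> u \<bullet> p2" by (rule cINF_lower[OF bb p2V])
    show ?thesis using e1 e2 s1 s2 i1 i2 by linarith
qed

lemma width_facts:
  fixes V :: "(real^'m::finite) set"
  assumes cpt: "compact V" and cvx: "convex V" and int: "interior V \<noteq> {}" and sym: "\<forall>y\<in>V. - y \<in> V"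
  shows "width V > 0" "cball 0 (width V / 2) \<subseteq> V"
proof -
  define H where "H u = (SUP y\<in>V. u \<bullet> y) - (INF y\<in>V. u \<bullet> y)" for u :: "real^'m"
  define WS where "WS = {H u | u. norm u = 1}"
  have wdef: "width V = Inf WS" unfolding width_def WS_def H_def ..
  obtain z where z: "z \<in> interior V" using int by auto
  then obtain r where r: "r > 0" "ball z r \<subseteq> V" using mem_interior by blast
  have Vne: "V \<noteq> {}" using r by auto
  have ba: "bdd_above ((\<lambda>y. u \<bullet> y) ` V)" and bb: "bdd_below ((\<lambda>y. u \<bullet> y) ` V)" for u
    using inner_bdd[OF cpt] by auto
  have WSne: "WS \<noteq> {}" unfolding WS_def using norm_axis_1 by blast
  have Hge: "H u \<ge> r" if u: "norm u = 1" for u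
  proof -
    show ?thesis unfolding H_def by (rule H_ge[OF u r sym ba bb])
  qed
  show wpos: "width V > 0"
  proof -
    have "r \<le> Inf WS"
    proof (rule cInf_greatest[OF WSne])
      fix v assume "v \<in> WS"
      then obtain u where "v = H u" "norm u = 1" unfolding WS_def by blast
      then show "r \<le> v" using Hge by simp
    qed
    then show ?thesis using r wdef by simp
  qed
  have WS0: "0 \<le> v" if v: "v \<in> WS" for v
  proof -
    obtain u where "v = H u" "norm u = 1" using v unfolding WS_def by blast
    then show ?thesis using Hge[of u] r by linarith
  qed
  have WSbdd: "bdd_below WS" by (rule bdd_belowI[of WS 0]) (rule WS0)
  show "cball 0 (width V / 2) \<subseteq> V"
  proof
    fix y :: "real^'m" assume y: "y \<in> cball 0 (width V / 2)"
    show "y \<in> V"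
    proof (rule ccontr)
      assume yV: "y \<notin> V"
      obtain a b where ab: "a \<bullet> y < b" "\<forall>x\<in>V. a \<bullet> x > b"
        using separating_hyperplane_closed_point[OF cvx compact_imp_closed[OF cpt] yV] by blast
      have a0: "a \<noteq> 0"
      proof
        assume "a = 0"
        moreover obtain x0 where "x0 \<in> V" using Vne by blast
        ultimately show False using ab by force
      qed
      define u where "u = a /\<^sub>R norm a"
      define \<beta> where "\<beta> = b / norm a"
      have na: "norm a > 0" using a0 by simp
      have nu: "norm u = 1" unfolding u_def using a0 by simp
      have uy: "u \<bullet> y < \<beta>" unfolding u_def \<beta>_def using divide_strict_right_mono[OF ab(1) na] by (simp only: inner_scaleR_left divide_inverse_commute)
      have ux: "u \<bullet> x > \<beta>" if "x \<in> V" for x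
        unfolding u_def \<beta>_def using divide_strict_right_mono[OF ab(2)[rule_format, OF that] na] by (simp only: inner_scaleR_left divide_inverse_commute)
      have inf: "(INF y\<in>V. u \<bullet> y) \<ge> \<beta>"
      proof (rule cINF_greatest[OF Vne])
        fix x assume "x \<in> V" then show "\<beta> \<le> u \<bullet> x" using ux less_imp_le by blast
      qed
      have sup: "(SUP y\<in>V. u \<bullet> y) \<le> - \<beta>"
      proof (rule cSUP_least[OF Vne])
        fix x assume "x \<in> V"
        then have "u \<bullet> (- x) > \<beta>" using sym ux by blast
        then show "u \<bullet> x \<le> - \<beta>" by simp
      qed
      have "H u \<le> - 2 * \<beta>" unfolding H_def using inf sup by linarith
      moreover have "- (width V / 2) \<le> u \<bullet> y"
      proof -
        have "\<bar>u \<bullet> y\<bar> \<le> norm y" using Cauchy_Schwarz_ineq2[of u y] nu by simp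
        moreover have "norm y \<le> width V / 2" using y by (simp add: dist_norm)
        ultimately show ?thesis by linarith
      qed
      moreover have "width V \<le> H u"
      proof -
        have "H u \<in> WS" unfolding WS_def using nu by blast
        then show ?thesis unfolding wdef by (rule cInf_lower[OF _ WSbdd])
      qed
      ultimately show False using uy by linarith
    qed
  qed
qed

lemma Pdeg_sub: "Pdeg n \<subseteq> (Qdeg n :: ('m::finite \<Rightarrow> nat) set)"
proof (rule subsetI)
  fix a :: "'m \<Rightarrow> nat" assume "a \<in> Pdeg n"
  then have s: "(\<Sum>j\<in>UNIV. a j) \<le> n" by (simp add: Pdeg_def)
  have "\<forall>j. a j \<le> n"
  proof
    fix j show "a j \<le> n" using member_le_sum[of j UNIV a] s by simp
  qed
  then show "a \<in> Qdeg n" by (simp add: Qdeg_def)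
qed

lemma Pdeg_finite: "finite (Pdeg n :: ('m::finite \<Rightarrow> nat) set)"
  by (rule finite_subset[OF Pdeg_sub Qdeg_finite])

lemma restrict_line:
  fixes x :: "real^'m::finite" and c :: "('m \<Rightarrow> nat) \<Rightarrow> complex"
  shows "mpoly_eval (Pdeg n) c (r *\<^sub>R x)
    = (\<Sum>d\<le>n. complex_of_real (r ^ d) *
        (\<Sum>a\<in>{a\<in>Pdeg n. (\<Sum>j\<in>UNIV. a j) = d}. c a * (\<Prod>j\<in>UNIV. complex_of_real ((x$j) ^ a j))))"
proof -
  have pr: "(\<Prod>j\<in>UNIV. complex_of_real (((r *\<^sub>R x)$j) ^ a j))
      = complex_of_real (r ^ (\<Sum>j\<in>UNIV. a j)) * (\<Prod>j\<in>UNIV. complex_of_real ((x$j) ^ a j))" for a :: "'m \<Rightarrow> nat"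
    by (simp add: power_mult_distrib prod.distrib power_sum)
  have "mpoly_eval (Pdeg n) c (r *\<^sub>R x)
      = (\<Sum>a\<in>Pdeg n. complex_of_real (r ^ (\<Sum>j\<in>UNIV. a j)) * (c a * (\<Prod>j\<in>UNIV. complex_of_real ((x$j) ^ a j))))"
    unfolding mpoly_eval_def pr by (simp add: ac_simps)
  also have "\<dots> = (\<Sum>d\<le>n. \<Sum>a\<in>{a\<in>Pdeg n. (\<Sum>j\<in>UNIV. a j) = d}.
        complex_of_real (r ^ (\<Sum>j\<in>UNIV. a j)) * (c a * (\<Prod>j\<in>UNIV. complex_of_real ((x$j) ^ a j))))"
    by (rule sum.group[symmetric]) (use Pdeg_finite in \<open>auto simp: Pdeg_def\<close>)
  also have "\<dots> = (\<Sum>d\<le>n. complex_of_real (r ^ d) *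
        (\<Sum>a\<in>{a\<in>Pdeg n. (\<Sum>j\<in>UNIV. a j) = d}. c a * (\<Prod>j\<in>UNIV. complex_of_real ((x$j) ^ a j))))"
    by (simp add: sum_distrib_left)
  finally show ?thesis .
qed

lemma parta:
  fixes V :: "(real^'m::finite) set" and x :: "real^'m" and c :: "('m \<Rightarrow> nat) \<Rightarrow> complex"
  assumes cpt: "compact V" and cvx: "convex V" and int: "interior V \<noteq> {}"
    and sym: "\<forall>y\<in>V. - y \<in> V" and xV: "x \<notin> V"
  shows "cmod (mpoly_eval (Pdeg n) c x)
         \<le> cheb n (2 * norm x / width V) * (SUP y\<in>V. cmod (mpoly_eval (Pdeg n) c y))"
proof -
  define w where "w = width V"
  have wpos: "w > 0" unfolding w_def by (rule width_facts(1)[OF cpt cvx int sym])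
  have cb: "cball 0 (w / 2) \<subseteq> V" unfolding w_def by (rule width_facts(2)[OF cpt cvx int sym])
  have nx: "norm x > w / 2"
  proof (rule ccontr)
    assume "\<not> norm x > w / 2"
    then have "x \<in> cball 0 (w / 2)" by (simp add: dist_norm)
    then show False using cb xV by blast
  qed
  have nx0: "norm x > 0" using nx wpos by linarith
  define t where "t = 2 * norm x / w"
  define \<rho> where "\<rho> = w / (2 * norm x)"
  have t1: "1 \<le> \<bar>t\<bar>" using nx wpos unfolding t_def by (simp add: field_simps)
  have t1': "1 \<le> t" using nx wpos unfolding t_def by (simp add: field_simps)
  have rpos: "\<rho> > 0" unfolding \<rho>_def by (intro divide_pos_pos) (use wpos nx0 in auto)
  have tr: "t * \<rho> = 1" using wpos nx0 unfolding t_def \<rho>_def by simp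
  define B where "B d = (\<Sum>a\<in>{a\<in>Pdeg n. (\<Sum>j\<in>UNIV. a j) = d}. c a * (\<Prod>j\<in>UNIV. complex_of_real ((x$j) ^ a j)))" for d
  define M where "M = (SUP y\<in>V. cmod (mpoly_eval (Pdeg n) c y))"
  have bdd: "bdd_above ((\<lambda>y. cmod (mpoly_eval (Pdeg n) c y)) ` V)" by (rule mpoly_bdd[OF cpt])
  define b' where "b' d = complex_of_real (\<rho> ^ d) * B d" for d
  have sum_b': "(\<Sum>d\<le>n. complex_of_real (s ^ d) * b' d) = mpoly_eval (Pdeg n) c ((s * \<rho>) *\<^sub>R x)" for s
    unfolding restrict_line B_def[symmetric] b'_def
    by (rule sum.cong) (simp_all add: power_mult_distrib)
  have hyp: "cmod (\<Sum>d\<le>n. complex_of_real (s ^ d) * b' d) \<le> M" if s: "\<bar>s\<bar> \<le> 1" for s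
  proof -
    have "norm ((s * \<rho>) *\<^sub>R x) \<le> w / 2"
    proof -
      have "norm ((s * \<rho>) *\<^sub>R x) = \<bar>s\<bar> * (\<rho> * norm x)" using rpos by (simp add: abs_mult)
      also have "\<rho> * norm x = w / 2" unfolding \<rho>_def using nx0 by simp
      finally show ?thesis using s wpos by (simp add: mult_left_le_one_le)
    qed
    then have "(s * \<rho>) *\<^sub>R x \<in> V" using cb by (auto simp: dist_norm)
    then show ?thesis unfolding sum_b' M_def by (rule cSUP_upper[OF _ bdd])
  qed
  have "cmod (\<Sum>d\<le>n. of_nat (fact 0 * (d choose 0)) * complex_of_real (t ^ (d - 0)) * b' d)
        \<le> \<bar>poly ((pderiv ^^ 0) (Tp n)) t\<bar> * M"
    by (rule uni_complex[OF t1 hyp])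
  moreover have "(\<Sum>d\<le>n. of_nat (fact 0 * (d choose 0)) * complex_of_real (t ^ (d - 0)) * b' d)
      = mpoly_eval (Pdeg n) c x"
  proof -
    have "(\<Sum>d\<le>n. of_nat (fact 0 * (d choose 0)) * complex_of_real (t ^ (d - 0)) * b' d)
        = (\<Sum>d\<le>n. complex_of_real (t ^ d) * b' d)" by simp
    also have "\<dots> = mpoly_eval (Pdeg n) c ((t * \<rho>) *\<^sub>R x)" by (rule sum_b')
    finally show ?thesis using tr by simp
  qed
  moreover have "\<bar>poly ((pderiv ^^ 0) (Tp n)) t\<bar> = cheb n (2 * norm x / width V)"
    using cheb_nonneg[OF t1'] unfolding t_def w_def by (simp add: Tp_cheb)
  ultimately show ?thesis unfolding M_def by simp
qed

theorem lemmaL2p4: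
  fixes n :: nat
  shows
   "(\<forall>(V :: (real^'m) set) (x :: real^'m) (c :: ('m \<Rightarrow> nat) \<Rightarrow> complex).
       compact V \<and> convex V \<and> interior V \<noteq> {} \<and> (\<forall>y\<in>V. - y \<in> V) \<and> x \<notin> V \<longrightarrow>
       cmod (mpoly_eval (Pdeg n) c x)
         \<le> cheb n (2 * norm x / width V) * (SUP y\<in>V. cmod (mpoly_eval (Pdeg n) c y)))
  \<and> (\<forall>(lam::real) (k :: 'm \<Rightarrow> nat) (x :: real^'m) (c :: ('m \<Rightarrow> nat) \<Rightarrow> complex).
       lam > 0 \<and> (\<forall>j. \<bar>x$j\<bar> > lam) \<longrightarrow>
       cmod (mpoly_deriv (Qdeg n) c k x)
         \<le> inverse (lam ^ (\<Sum>j\<in>UNIV. k j))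
            * \<bar>\<Prod>j\<in>UNIV. (deriv ^^ k j) (cheb n) (x$j / lam)\<bar>
            * (SUP y\<in>cube lam. cmod (mpoly_eval (Qdeg n) c y)))"
  using parta partb by blast

end
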